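(* Let $\Delta\subset\mathbb{Z}^2\setminus\{(0,0)\}$ be a finite multiset which is balanced, non-degenerate and even, with associated polygon $P_\Delta$, sides $\sigma\in P^1_\Delta$, numbers $n^\sigma$ and $k^\sigma_i$ as in the context. Then the set of sequences $\boldsymbol z=(z^\sigma_i)_{\sigma\in P^1_\Delta,\,1\le i\le n^\sigma}$, $z^\sigma_i\in\operatorname{Tor}(\sigma)^\times$, satisfying the Menelaus $\Delta$-condition forms an algebraic hypersurface $\operatorname{Men}(\Delta)\subset\prod_{\sigma\in P^1_\Delta}\operatorname{Tor}(\sigma)^{n^\sigma}$.
   Context: A multiset $\Delta\subset\mathbb{Z}^2\setminus\{(0,0)\}$ is balanced if its elements sum to $0$, non-degenerate if its elements span $\mathbb{R}^2$, and even if $\Delta\subset(2\mathbb{Z})^2$. Rotating each $\boldsymbol a\in\Delta$ counterclockwise by $\pi/2$ and concatenating the resulting vectors gives the counterclockwise oriented boundary of a convex lattice polygon $P_\Delta$ (defined up to translation). $P^1_\Delta$ denotes the set of sides of $P_\Delta$; for $\sigma\in P^1_\Delta$, let $\boldsymbol a^\sigma_1,\dots,\boldsymbol a^\sigma_{n^\sigma}$ be the elements of $\Delta$ that are outer normals to $\sigma$, and let $2k^\sigma_i$ be the lattice length of $\boldsymbol a^\sigma_i$ (its Euclidean length divided by the length of a primitive parallel integral vector). $\operatorname{Tor}(P_\Delta)$ is the complex toric surface of $P_\Delta$, $\operatorname{Tor}(\sigma)$ the toric divisor corresponding to $\sigma$, $\operatorname{Tor}(\sigma)^\times\cong\mathbb{C}^\times$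 its dense orbit, and $\mathcal{L}_{P_\Delta}$ the tautological line bundle (its global sections are spanned by the monomials $z^\omega$, $\omega\in P_\Delta\cap\mathbb{Z}^2$). A sequence $\boldsymbol z=(z^\sigma_i)$ with $z^\sigma_i\in\operatorname{Tor}(\sigma)^\times$ satisfies the Menelaus $\Delta$-condition if there is a curve $C\in|\mathcal{L}_{P_\Delta}|$ containing no toric divisor as a component such that, for each $\sigma\in P^1_\Delta$, the scheme-theoretic intersection of $C$ and $\operatorname{Tor}(\sigma)$ equals $\sum_{i=1}^{n^\sigma}2k^\sigma_i z^\sigma_i$. *)

theory Defs
  imports "HOL-Analysis.Analysis"
begin

definition ip :: "int \<times> int \<Rightarrow> int \<times> int \<Rightarrow> int" where
  "ip a b = fst a * fst b + snd a * snd b"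

definition det2 :: "int \<times> int \<Rightarrow> int \<times> int \<Rightarrow> int" where
  "det2 a b = fst a * snd b - snd a * fst b"

definition toR :: "int \<times> int \<Rightarrow> real \<times> real" where
  "toR a = (real_of_int (fst a), real_of_int (snd a))"

definition llen :: "int \<times> int \<Rightarrow> nat" where
  "llen a = nat (gcd (fst a) (snd a))"

definition prim :: "int \<times> int \<Rightarrow> int \<times> int" where
  "prim a = (fst a div gcd (fst a) (snd a), snd a div gcd (fst a) (snd a))"

definition primitive :: "int \<times> int \<Rightarrow> bool" where
  "primitive u \<longleftrightarrow> gcd (fst u) (snd u) = 1"

definition rot :: "int \<times> int \<Rightarrow> int \<times> int" where
  "rot a = (- snd a, fst a)"

text \<open>The multiset Delta is given as a list D (the list order indexes the elements,
  so that a sequence z = (z_i^sigma) becomes a function on indices j < length D).\<close>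

definition balanced :: "(int \<times> int) list \<Rightarrow> bool" where
  "balanced D \<longleftrightarrow> sum_list D = (0, 0)"

definition nondegenerate :: "(int \<times> int) list \<Rightarrow> bool" where
  "nondegenerate D \<longleftrightarrow> (\<exists>a\<in>set D. \<exists>b\<in>set D. det2 a b \<noteq> 0)"

definition even_multiset :: "(int \<times> int) list \<Rightarrow> bool" where
  "even_multiset D \<longleftrightarrow> (\<forall>a\<in>set D. even (fst a) \<and> even (snd a))"

definition face :: "(real \<times> real) set \<Rightarrow> int \<times> int \<Rightarrow> (real \<times> real) set" where
  "face P u = {x \<in> P. \<forall>y\<in>P. y \<bullet> toR u \<le> x \<bullet> toR u}"

definition lat :: "(real \<times> real) set \<Rightarrow> (int \<times> int) set" where
  "lat P = {w. toR w \<in> P}"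

text \<open>P is (a translate of) the polygon P_Delta: a convex lattice polygon whose side with
  outer primitive normal u has lattice length equal to the sum of the lattice lengths of
  the elements of D that are positive multiples of u (and which is a vertex if there are
  none).  By Minkowski's theorem this determines P up to translation.\<close>

definition is_P_Delta :: "(int \<times> int) list \<Rightarrow> (real \<times> real) set \<Rightarrow> bool" where
  "is_P_Delta D P \<longleftrightarrow>
     (\<exists>S. finite S \<and> P = convex hull (toR ` S)) \<and>
     (\<forall>u. primitive u \<longrightarrow>
        card (lat (face P u)) =
          1 + (\<Sum>j\<in>{j. j < length D \<and> prim (D ! j) = u}. llen (D ! j)))"

text \<open>Coordinate on Tor(sigma)^x: for the side with outer normal u, the lattice points of
  the side are w0 + i * rot u; the character z^(rot u) restricted to Tor(sigma)^x is the
  coordinate t.  A linear functional w with ip w (rot u) = 1 reads off the index i (up to a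
  constant shift).\<close>

definition dualv :: "int \<times> int \<Rightarrow> int \<times> int" where
  "dualv u = (SOME w. ip w (rot u) = 1)"

text \<open>A curve C in |L_P| is the zero set of a polynomial
  f = sum_{w in P cap Z^2} c_w z^w.  Its scheme-theoretic intersection with Tor(sigma)
  (sigma with outer normal u) is the divisor of the truncation f^sigma; the condition
  C . Tor(sigma) = sum 2 k_i z_i (all points in Tor(sigma)^x, and Tor(sigma) not a
  component) says that f^sigma equals, up to a nonzero constant and a monomial factor,
  prod_i (t - z_i)^(2 k_i).\<close>

definition menelaus :: "(int \<times> int) list \<Rightarrow> (real \<times> real) set \<Rightarrow> (nat \<Rightarrow> complex) \<Rightarrow> bool" where
  "menelaus D P z \<longleftrightarrow>
     (\<exists>c :: int \<times> int \<Rightarrow> complex.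
        \<forall>j < length D.
          (\<exists>lam :: complex. lam \<noteq> 0 \<and> (\<exists>s :: int. \<forall>t :: complex. t \<noteq> 0 \<longrightarrow>
             (\<Sum>w\<in>lat (face P (prim (D ! j))). c w * t powi ip w (dualv (prim (D ! j)))) =
             lam * t powi s *
               (\<Prod>i\<in>{i. i < length D \<and> prim (D ! i) = prim (D ! j)}. (t - z i) ^ llen (D ! i)))))"

text \<open>The ambient torus prod_sigma Tor(sigma)^(n^sigma) = (C^x)^m, m = length D.\<close>

definition torus :: "nat \<Rightarrow> (nat \<Rightarrow> complex) set" where
  "torus m = {z. (\<forall>j<m. z j \<noteq> 0) \<and> (\<forall>j\<ge>m. z j = 0)}"

definition laurent_poly :: "nat \<Rightarrow> ((nat \<Rightarrow> int) \<Rightarrow> complex) \<Rightarrow> bool" where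
  "laurent_poly m p \<longleftrightarrow> finite {e. p e \<noteq> 0} \<and> (\<forall>e. p e \<noteq> 0 \<longrightarrow> (\<forall>j\<ge>m. e j = 0))"

definition laurent_eval :: "nat \<Rightarrow> ((nat \<Rightarrow> int) \<Rightarrow> complex) \<Rightarrow> (nat \<Rightarrow> complex) \<Rightarrow> complex" where
  "laurent_eval m p z = (\<Sum>e\<in>{e. p e \<noteq> 0}. p e * (\<Prod>j<m. z j powi e j))"

text \<open>An algebraic hypersurface in the torus (C^x)^m: the zero locus of a Laurent polynomial
  which is not a unit of the Laurent polynomial ring (i.e. has at least two terms).\<close>

definition torus_hypersurface :: "nat \<Rightarrow> (nat \<Rightarrow> complex) set \<Rightarrow> bool" where
  "torus_hypersurface m X \<longleftrightarrow>
     (\<exists>p. laurent_poly m p \<and> (\<exists>e1 e2. e1 \<noteq> e2 \<and> p e1 \<noteq> 0 \<and> p e2 \<noteq> 0) \<and>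
          X = {z \<in> torus m. laurent_eval m p z = 0})"

end

theory Submission
  imports Defs "HOL-Computational_Algebra.Polynomial"
begin


lemma ip_rot: "ip x (rot u) = det2 u x"
  by (simp add: ip_def rot_def det2_def algebra_simps)

lemma det2_anti: "det2 a b = - det2 b a"
  by (simp add: det2_def algebra_simps)

lemma prim_props:
  assumes "a \<noteq> (0,0)"
  shows "primitive (prim a)"
    and "fst a = gcd (fst a) (snd a) * fst (prim a)"
    and "snd a = gcd (fst a) (snd a) * snd (prim a)"
    and "gcd (fst a) (snd a) > 0"
    and "llen a \<ge> 1"
    and "int (llen a) = gcd (fst a) (snd a)"
proof -
  have nz: "fst a \<noteq> 0 \<or> snd a \<noteq> 0" using assms by (cases a) auto
  then have g: "gcd (fst a) (snd a) > 0" by simp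
  show "gcd (fst a) (snd a) > 0" by (rule g)
  show "primitive (prim a)" unfolding primitive_def prim_def
    using div_gcd_coprime[OF nz] by (simp add: coprime_iff_gcd_eq_1)
  show "fst a = gcd (fst a) (snd a) * fst (prim a)" unfolding prim_def by simp
  show "snd a = gcd (fst a) (snd a) * snd (prim a)" unfolding prim_def by simp
  show "llen a \<ge> 1" using g by (simp add: llen_def Suc_le_eq)
  show "int (llen a) = gcd (fst a) (snd a)" unfolding llen_def using g by simp
qed

lemma primitive_nz: "primitive u \<Longrightarrow> u \<noteq> (0,0)"
  by (auto simp: primitive_def)

lemma bezout_prim:
  assumes "primitive u"
  obtains p q where "p * fst u + q * snd u = 1"
  using bezout_int[of "fst u" "snd u"] assms unfolding primitive_def by auto

lemma perp_prim_ex: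
  assumes "primitive u" "ip d u = 0"
  shows "\<exists>k. d = (k * fst (rot u), k * snd (rot u))"
proof -
  obtain p q where pq: "p * fst u + q * snd u = 1" using bezout_prim[OF assms(1)] by blast
  have e: "fst d * fst u + snd d * snd u = 0" using assms(2) by (simp add: ip_def)
  have e1: "fst d * fst u = - (snd d * snd u)" and e2: "snd d * snd u = - (fst d * fst u)" using e by linarith+
  define k0 where "k0 = p * snd d - q * fst d"
  have "fst d = fst d * (p * fst u + q * snd u)" using pq by simp
  also have "\<dots> = p * (fst d * fst u) + q * snd u * fst d" by (simp add: algebra_simps)
  also have "\<dots> = p * (- (snd d * snd u)) + q * snd u * fst d" by (simp only: e1)
  also have "\<dots> = k0 * (- snd u)" by (simp add: k0_def algebra_simps)
  finally have 1: "fst d = k0 * fst (rot u)" by (simp add: rot_def)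
  have "snd d = snd d * (p * fst u + q * snd u)" using pq by simp
  also have "\<dots> = p * fst u * snd d + q * (snd d * snd u)" by (simp add: algebra_simps)
  also have "\<dots> = p * fst u * snd d + q * (- (fst d * fst u))" by (simp only: e2)
  also have "\<dots> = k0 * fst u" by (simp add: k0_def algebra_simps)
  finally have 2: "snd d = k0 * snd (rot u)" by (simp add: rot_def)
  show ?thesis using 1 2 by (metis prod.collapse)
qed

lemma dualv_prop: assumes "primitive u" shows "ip (dualv u) (rot u) = 1"
proof -
  obtain p q where pq: "p * fst u + q * snd u = 1" using bezout_prim[OF assms] by blast
  have "ip (-q, p) (rot u) = 1" using pq by (simp add: ip_def rot_def algebra_simps)
  then show ?thesis unfolding dualv_def by (rule someI)
qed

lemma primitive_rot: "primitive u \<Longrightarrow> primitive (rot u)"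
  by (simp add: primitive_def rot_def gcd.commute)

lemma prim_parallel:
  assumes "primitive a" "primitive b" "det2 a b = 0"
  shows "b = a \<or> b = (- fst a, - snd a)"
proof -
  have "ip b (rot a) = 0" using assms(3) by (simp add: ip_rot)
  then obtain k where k: "b = (k * fst (rot (rot a)), k * snd (rot (rot a)))"
    using perp_prim_ex[OF primitive_rot[OF assms(1)]] by blast
  then have b: "b = ((-k) * fst a, (-k) * snd a)" by (simp add: rot_def)
  have "1 = gcd (fst b) (snd b)" using assms(2) by (simp add: primitive_def)
  also have "\<dots> = \<bar>-k\<bar> * gcd (fst a) (snd a)" by (simp add: b gcd_mult_distrib_int)
  also have "\<dots> = \<bar>k\<bar>" using assms(1) by (simp add: primitive_def)
  finally have "k = 1 \<or> k = -1" by linarith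
  then show ?thesis using b by auto
qed


definition mv :: "int \<times> int \<Rightarrow> int \<Rightarrow> int \<times> int \<Rightarrow> int \<times> int" where
  "mv x k r = (fst x + k * fst r, snd x + k * snd r)"

lemma inner_toR: "toR x \<bullet> toR w = real_of_int (ip x w)"
  by (simp add: toR_def ip_def inner_Pair)

lemma inner_toR': "toR w \<bullet> toR x = real_of_int (ip x w)"
  by (simp add: toR_def ip_def inner_Pair mult.commute)

lemma ip_mv: "ip (mv x k r) w = ip x w + k * ip r w"
  by (simp add: mv_def ip_def algebra_simps)

lemma ip_rot_self: "ip (rot u) u = 0"
  by (simp add: ip_def rot_def algebra_simps)

locale pd =
  fixes D :: "(int \<times> int) list" and P :: "(real \<times> real) set" and S :: "(int \<times> int) set"
  assumes nz: "(0,0) \<notin> set D" and bal: "balanced D" and nd: "nondegenerate D"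
    and finS: "finite S" and PS: "P = convex hull (toR ` S)"
    and cardF: "\<And>u. primitive u \<Longrightarrow> card (lat (face P u)) =
          1 + (\<Sum>j\<in>{j. j < length D \<and> prim (D ! j) = u}. llen (D ! j))"
begin

definition LF where "LF w = lat (face P w)"
definition U where "U = prim ` set D"
definition J where "J u = {j. j < length D \<and> prim (D ! j) = u}"
definition L where "L u = (\<Sum>j\<in>J u. llen (D ! j))"
definition E where "E u x = ip x (dualv u)"

lemma cardLF: "primitive u \<Longrightarrow> card (LF u) = 1 + L u"
  using cardF by (simp add: LF_def L_def J_def)

lemma S_in_P: "s \<in> S \<Longrightarrow> toR s \<in> P"
  unfolding PS by (simp add: hull_inc)

lemma P_bound:
  assumes "toR x \<in> P" "\<forall>s\<in>S. ip s w \<le> c"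
  shows "ip x w \<le> c"
proof -
  have "toR ` S \<subseteq> {y. toR w \<bullet> y \<le> real_of_int c}"
    using assms(2) by (auto simp: inner_toR')
  moreover have "convex {y. toR w \<bullet> y \<le> real_of_int c}" by (rule convex_halfspace_le)
  ultimately have "P \<subseteq> {y. toR w \<bullet> y \<le> real_of_int c}" unfolding PS by (rule hull_minimal)
  then have "toR w \<bullet> toR x \<le> real_of_int c" using assms(1) by auto
  then show ?thesis by (simp add: inner_toR')
qed

lemma LF_iff: "x \<in> LF w \<longleftrightarrow> toR x \<in> P \<and> (\<forall>s\<in>S. ip s w \<le> ip x w)"
proof
  assume "x \<in> LF w"
  then have x: "toR x \<in> P" "\<forall>y\<in>P. y \<bullet> toR w \<le> toR x \<bullet> toR w"
    by (auto simp: LF_def lat_def face_def)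
  have "\<forall>s\<in>S. ip s w \<le> ip x w"
  proof
    fix s assume "s \<in> S"
    from x(2)[rule_format, OF S_in_P[OF this]] show "ip s w \<le> ip x w" by (simp add: inner_toR)
  qed
  then show "toR x \<in> P \<and> (\<forall>s\<in>S. ip s w \<le> ip x w)" using x(1) by blast
next
  assume a: "toR x \<in> P \<and> (\<forall>s\<in>S. ip s w \<le> ip x w)"
  have "\<forall>y\<in>P. y \<bullet> toR w \<le> toR x \<bullet> toR w"
  proof
    fix y assume y: "y \<in> P"
    have "toR ` S \<subseteq> {y. toR w \<bullet> y \<le> real_of_int (ip x w)}"
      using a by (auto simp: inner_toR')
    moreover have "convex {y. toR w \<bullet> y \<le> real_of_int (ip x w)}" by (rule convex_halfspace_le)
    ultimately have "P \<subseteq> {y. toR w \<bullet> y \<le> real_of_int (ip x w)}" unfolding PS by (rule hull_minimal)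
    then have "y \<bullet> toR w \<le> real_of_int (ip x w)" using y by (auto simp: inner_commute)
    then show "y \<bullet> toR w \<le> toR x \<bullet> toR w" by (simp add: inner_toR)
  qed
  then show "x \<in> LF w" using a by (auto simp: LF_def lat_def face_def)
qed

lemma LF_le: "x \<in> LF w \<Longrightarrow> toR y \<in> P \<Longrightarrow> ip y w \<le> ip x w"
  using P_bound LF_iff by blast

lemma LF_eq: "x \<in> LF w \<Longrightarrow> y \<in> LF w \<Longrightarrow> ip y w = ip x w"
  using LF_le LF_iff by (meson antisym)

lemma LF_P: "x \<in> LF w \<Longrightarrow> toR x \<in> P"
  using LF_iff by blast

lemma LF_scale: "g > 0 \<Longrightarrow> LF (g * fst w, g * snd w) = LF w"
proof -
  assume g: "g > 0"
  have ipg: "\<And>a. ip a (g * fst w, g * snd w) = g * ip a w" by (simp add: ip_def algebra_simps)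
  have "\<And>x. (\<forall>s\<in>S. ip s (g * fst w, g * snd w) \<le> ip x (g * fst w, g * snd w)) \<longleftrightarrow> (\<forall>s\<in>S. ip s w \<le> ip x w)"
    using g by (simp only: ipg mult_le_cancel_left_pos)
  then show ?thesis by (simp only: LF_iff set_eq_iff) blast
qed

lemma S_ne: "S \<noteq> {}"
proof
  assume "S = {}"
  then have "P = {}" using PS by simp
  then have "LF (1,0) = {}" unfolding LF_def lat_def face_def by simp
  moreover have "primitive (1::int,0::int)" by (simp add: primitive_def)
  ultimately show False using cardLF[of "(1,0)"] by simp
qed

lemma LF_finite: "primitive u \<Longrightarrow> finite (LF u)"
proof -
  assume "primitive u"
  then have "card (LF u) > 0" by (simp add: cardLF)
  then show ?thesis by (rule card_ge_0_finite)
qed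

lemma D_nz: "j < length D \<Longrightarrow> D ! j \<noteq> (0,0)"
proof
  assume "j < length D" "D ! j = (0,0)"
  then have "(0,0) \<in> set D" by (metis nth_mem)
  then show False using nz by blast
qed

lemma U_prim: "u \<in> U \<Longrightarrow> primitive u"
proof -
  assume "u \<in> U"
  then obtain a where "a \<in> set D" "u = prim a" unfolding U_def by blast
  moreover then have "a \<noteq> (0,0)" using nz by blast
  ultimately show ?thesis using prim_props(1) by blast
qed

lemma U_L: "u \<in> U \<Longrightarrow> L u \<ge> 1"
proof -
  assume "u \<in> U"
  then obtain j where j: "j < length D" "prim (D ! j) = u" unfolding U_def by (metis in_set_conv_nth imageE)
  have fin: "finite (J u)" by (simp add: J_def)
  have "j \<in> J u" using j by (simp add: J_def)
  then have "llen (D ! j) \<le> L u" unfolding L_def using fin by (metis member_le_sum zero_le)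
  moreover have "llen (D ! j) \<ge> 1" using prim_props(5)[OF D_nz[OF j(1)]] .
  ultimately show ?thesis by simp
qed

lemma U_card: "u \<in> U \<Longrightarrow> card (LF u) \<ge> 2"
proof -
  assume u: "u \<in> U"
  show ?thesis using U_L[OF u] cardLF[OF U_prim[OF u]] by simp
qed

lemma card2_U:
  assumes "primitive v" "x \<in> LF v" "y \<in> LF v" "x \<noteq> y"
  shows "v \<in> U"
proof -
  have "{x, y} \<subseteq> LF v" using assms by blast
  then have "card {x, y} \<le> card (LF v)" using LF_finite[OF assms(1)] by (rule card_mono[rotated])
  then have "card (LF v) \<ge> 2" using assms(4) by simp
  then have "L v \<ge> 1" using cardLF[OF assms(1)] by simp
  then have "J v \<noteq> {}" unfolding L_def by (metis sum.empty not_one_le_zero)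
  then obtain j where "j < length D" "prim (D ! j) = v" unfolding J_def by auto
  then show ?thesis unfolding U_def by (metis nth_mem image_eqI)
qed

end


lemma ip_comm: "ip a b = ip b a"
  by (simp add: ip_def mult.commute)

context pd begin

lemma LF_diff:
  assumes u: "primitive u" and x: "x \<in> LF u" and y: "y \<in> LF u"
  shows "y = mv x (E u y - E u x) (rot u)"
proof -
  define d where "d = (fst y - fst x, snd y - snd x)"
  have "ip y u = ip x u" using LF_eq x y by blast
  then have "ip d u = 0" by (simp add: d_def ip_def algebra_simps)
  then obtain k where k: "d = (k * fst (rot u), k * snd (rot u))" using perp_prim_ex[OF u] by blast
  have "fst y = fst x + k * fst (rot u)" "snd y = snd x + k * snd (rot u)"
    using arg_cong[OF k, of fst] arg_cong[OF k, of snd] by (simp_all add: d_def)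
  then have y': "y = mv x k (rot u)" unfolding mv_def by (simp add: prod_eq_iff)
  have "E u y = E u x + k * ip (rot u) (dualv u)" unfolding E_def y' ip_mv by simp
  also have "ip (rot u) (dualv u) = 1" using dualv_prop[OF u] by (simp add: ip_comm)
  finally have "k = E u y - E u x" by simp
  then show ?thesis using y' by simp
qed

lemma E_mv: "primitive u \<Longrightarrow> E u (mv x k (rot u)) = E u x + k"
  unfolding E_def ip_mv using dualv_prop by (simp add: ip_comm)

lemma LF_convex:
  assumes u: "primitive u" and x: "x \<in> LF u" and y: "mv x K (rot u) \<in> LF u"
    and k: "0 \<le> k" "k \<le> K"
  shows "mv x k (rot u) \<in> LF u"
proof (cases "K = 0")
  case True
  then have "k = 0" using k by simp
  then show ?thesis using x by (simp add: mv_def)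
next
  case False
  then have K: "K > 0" using k by simp
  define a where "a = real_of_int k / real_of_int K"
  have a0: "0 \<le> a" "a \<le> 1" using k K by (auto simp: a_def)
  have eq: "toR (mv x k (rot u)) = (1 - a) *\<^sub>R toR x + a *\<^sub>R toR (mv x K (rot u))"
    using K by (simp add: toR_def mv_def a_def field_simps)
  have "convex P" using PS by simp
  then have "toR (mv x k (rot u)) \<in> P" unfolding eq
    using LF_P[OF x] LF_P[OF y] a0 by (simp add: convexD)
  moreover have "ip (mv x k (rot u)) u = ip x u" by (simp add: ip_mv ip_rot_self)
  ultimately show ?thesis using x unfolding LF_iff by simp
qed

definition sp where "sp u = (SOME x. x \<in> LF u \<and> (\<forall>y\<in>LF u. E u x \<le> E u y))"
definition ep where "ep u = (SOME x. x \<in> LF u \<and> (\<forall>y\<in>LF u. E u y \<le> E u x))"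

lemma U_ne: "u \<in> U \<Longrightarrow> LF u \<noteq> {}"
proof
  assume "u \<in> U" "LF u = {}"
  then show False using U_card[of u] by simp
qed

lemma sp_prop: assumes "u \<in> U" shows "sp u \<in> LF u" "\<forall>y\<in>LF u. E u (sp u) \<le> E u y"
proof -
  have fin: "finite (LF u)" using LF_finite U_prim assms by blast
  have f2: "finite (E u ` LF u)" "E u ` LF u \<noteq> {}" using fin U_ne[OF assms] by auto
  obtain x where x: "x \<in> LF u" "E u x = Min (E u ` LF u)" using Min_in[OF f2] by auto
  have "\<forall>y\<in>LF u. E u x \<le> E u y" using x(2) Min_le[OF f2(1)] by simp
  then have "\<exists>x. x \<in> LF u \<and> (\<forall>y\<in>LF u. E u x \<le> E u y)" using x(1) by blast
  from someI_ex[OF this] show "sp u \<in> LF u" "\<forall>y\<in>LF u. E u (sp u) \<le> E u y"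
    unfolding sp_def by blast+
qed

lemma ep_prop: assumes "u \<in> U" shows "ep u \<in> LF u" "\<forall>y\<in>LF u. E u y \<le> E u (ep u)"
proof -
  have fin: "finite (LF u)" using LF_finite U_prim assms by blast
  have f2: "finite (E u ` LF u)" "E u ` LF u \<noteq> {}" using fin U_ne[OF assms] by auto
  obtain x where x: "x \<in> LF u" "E u x = Max (E u ` LF u)" using Max_in[OF f2] by auto
  have "\<forall>y\<in>LF u. E u y \<le> E u x" using x(2) Max_ge[OF f2(1)] by simp
  then have "\<exists>x. x \<in> LF u \<and> (\<forall>y\<in>LF u. E u y \<le> E u x)" using x(1) by blast
  from someI_ex[OF this] show "ep u \<in> LF u" "\<forall>y\<in>LF u. E u y \<le> E u (ep u)"
    unfolding ep_def by blast+
qed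

lemma face_struct:
  assumes uU: "u \<in> U"
  shows "LF u = (\<lambda>k. mv (sp u) k (rot u)) ` {0..int (L u)}"
    and "ep u = mv (sp u) (int (L u)) (rot u)"
proof -
  have u: "primitive u" using U_prim uU by blast
  define K where "K = E u (ep u) - E u (sp u)"
  have K0: "K \<ge> 0" using sp_prop[OF uU] ep_prop[OF uU] K_def by auto
  have epK: "ep u = mv (sp u) K (rot u)" using LF_diff[OF u sp_prop(1)[OF uU] ep_prop(1)[OF uU]] K_def by simp
  define f where "f = (\<lambda>k. mv (sp u) k (rot u))"
  have sub1: "f ` {0..K} \<subseteq> LF u"
    using LF_convex[OF u sp_prop(1)[OF uU]] ep_prop(1)[OF uU] epK by (auto simp: f_def)
  have sub2: "LF u \<subseteq> f ` {0..K}"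
  proof
    fix y assume y: "y \<in> LF u"
    have "y = f (E u y - E u (sp u))" using LF_diff[OF u sp_prop(1)[OF uU] y] by (simp add: f_def)
    moreover have "E u y - E u (sp u) \<in> {0..K}" using sp_prop(2)[OF uU] ep_prop(2)[OF uU] y K_def by auto
    ultimately show "y \<in> f ` {0..K}" by blast
  qed
  have eqLF: "LF u = f ` {0..K}" using sub1 sub2 by blast
  have inj: "inj_on f {0..K}"
  proof (rule inj_onI)
    fix a b assume "f a = f b"
    then have "E u (f a) = E u (f b)" by simp
    then show "a = b" using E_mv[OF u] by (simp add: f_def)
  qed
  have "card (LF u) = card {0..K}" using eqLF card_image[OF inj] by simp
  also have "\<dots> = nat K + 1" using K0 by simp
  finally have "int (L u) = K" using cardLF[OF u] K0 by simp
  then show "LF u = (\<lambda>k. mv (sp u) k (rot u)) ` {0..int (L u)}" "ep u = mv (sp u) (int (L u)) (rot u)"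
    using eqLF epK by (simp_all add: f_def)
qed

end


lemma det2_id: "det2 a b * det2 w c + det2 b c * det2 w a + det2 c a * det2 w b = 0"
  by (simp add: det2_def algebra_simps)

lemma det2_trans:
  assumes "0 < s * det2 w a" "0 < s * det2 w b" "0 < s * det2 w c" "det2 a b > 0" "det2 b c > 0"
  shows "det2 a c > 0"
proof -
  have "det2 a b * (s * det2 w c) + det2 b c * (s * det2 w a) + det2 c a * (s * det2 w b) = 0"
    using arg_cong[OF det2_id[of a b w c], of "\<lambda>t. s * t"] by (simp add: algebra_simps)
  moreover have "det2 a b * (s * det2 w c) > 0" "det2 b c * (s * det2 w a) > 0" using assms by simp_all
  ultimately have "det2 c a * (s * det2 w b) < 0" by linarith
  then have "det2 c a < 0"
  proof (rule contrapos_pp)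
    assume "\<not> det2 c a < 0"
    then show "\<not> det2 c a * (s * det2 w b) < 0"
      using mult_nonneg_nonneg[of "det2 c a" "s * det2 w b"] assms(2) by linarith
  qed
  then show ?thesis using det2_anti[of a c] by simp
qed

lemma det2_neg: "det2 a (- fst b, - snd b) = - det2 a b" "det2 (- fst b, - snd b) a = - det2 b a"
  by (simp_all add: det2_def)

lemma det2_self: "det2 a a = 0" by (simp add: det2_def)

lemma det2_sum_list: "det2 u (sum_list xs) = sum_list (map (det2 u) xs)"
  by (induction xs) (simp_all add: det2_def algebra_simps)

lemma det2_zero_both:
  assumes "u \<noteq> (0,0)" "det2 u a = 0" "det2 u b = 0" shows "det2 a b = 0"
proof -
  have "fst u * det2 a b = fst a * det2 u b - fst b * det2 u a"
       "snd u * det2 a b = snd a * det2 u b - snd b * det2 u a"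
    by (simp_all add: det2_def algebra_simps)
  then have "fst u * det2 a b = 0" "snd u * det2 a b = 0" using assms by simp_all
  then show ?thesis using assms(1) by (cases u) auto
qed

lemma sum_list_neg: "sum_list (map (\<lambda>a. - (f a :: int)) xs) = - sum_list (map f xs)"
  by (induction xs) simp_all

context pd begin

lemma det2_prim: "a \<noteq> (0,0) \<Longrightarrow> det2 u a = gcd (fst a) (snd a) * det2 u (prim a)"
  using prim_props(2,3)[of a] by (simp add: det2_def algebra_simps)

lemma exists_pos:
  assumes uU: "u \<in> U" shows "\<exists>v\<in>U. det2 u v > 0"
proof (rule ccontr)
  assume "\<not> ?thesis"
  then have neg: "\<forall>v\<in>U. det2 u v \<le> 0" by auto
  have le: "\<forall>a\<in>set D. det2 u a \<le> 0"
  proof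
    fix a assume a: "a \<in> set D"
    then have "a \<noteq> (0,0)" using nz by blast
    moreover have "prim a \<in> U" using a by (simp add: U_def)
    ultimately show "det2 u a \<le> 0" using det2_prim[of a u] neg prim_props(4)[of a]
      by (simp add: mult_nonneg_nonpos)
  qed
  have "sum_list (map (\<lambda>a. - det2 u a) D) = - det2 u (sum_list D)"
    by (simp add: det2_sum_list sum_list_neg)
  also have "\<dots> = 0" using bal by (simp add: balanced_def det2_def)
  finally have s0: "sum_list (map (\<lambda>a. - det2 u a) D) = 0" .
  have nn: "\<And>x. x \<in> set (map (\<lambda>a. - det2 u a) D) \<Longrightarrow> 0 \<le> x" using le by auto
  have all0: "\<forall>x\<in>set (map (\<lambda>a. - det2 u a) D). x = 0"
    using sum_list_nonneg_eq_0_iff[OF nn] s0 by blast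
  have z: "\<forall>a\<in>set D. det2 u a = 0"
  proof
    fix a assume "a \<in> set D"
    then have "- det2 u a \<in> set (map (\<lambda>a. - det2 u a) D)" by simp
    then show "det2 u a = 0" using all0 by fastforce
  qed
  have "u \<noteq> (0,0)" using U_prim[OF uU] primitive_nz by blast
  then have "\<forall>a\<in>set D. \<forall>b\<in>set D. det2 a b = 0" using z det2_zero_both by blast
  then show False using nd by (auto simp: nondegenerate_def)
qed

lemma half_distinct:
  assumes "x \<in> U" "y \<in> U" "x \<noteq> y" "det2 u x > 0" "det2 u y > 0"
  shows "det2 x y \<noteq> 0"
proof
  assume "det2 x y = 0"
  then have "y = x \<or> y = (- fst x, - snd x)" using prim_parallel U_prim assms(1,2) by blast
  then show False using assms(3-5) det2_neg(1)[of u x] by auto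
qed

definition between where "between a x b \<longleftrightarrow> det2 a x > 0 \<and> det2 x b > 0"

definition nxt where "nxt u = (SOME v. v \<in> U \<and> det2 u v > 0 \<and> (\<forall>x\<in>U. \<not> between u x v))"

lemma nxt_ex: assumes uU: "u \<in> U"
  shows "\<exists>v. v \<in> U \<and> det2 u v > 0 \<and> (\<forall>x\<in>U. \<not> between u x v)"
proof -
  define C where "C = {v\<in>U. det2 u v > 0}"
  have finC: "finite C" unfolding C_def U_def by simp
  have neC: "C \<noteq> {}" using exists_pos[OF uU] C_def by auto
  define key where "key x = real_of_int (ip x u) / real_of_int (det2 u x)" for x
  have f2: "finite (key ` C)" "key ` C \<noteq> {}" using finC neC by auto
  obtain v where v: "v \<in> C" "key v = Max (key ` C)" using Max_in[OF f2] by auto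
  have vmax: "\<forall>x\<in>C. key x \<le> key v" using v(2) Max_ge[OF f2(1)] by simp
  have "\<forall>x\<in>U. \<not> between u x v"
  proof (intro ballI notI)
    fix x assume xU: "x \<in> U" and b: "between u x v"
    then have xC: "x \<in> C" by (simp add: C_def between_def)
    have id: "ip x u * det2 u v - ip v u * det2 u x = ip u u * det2 x v"
      by (simp add: ip_def det2_def algebra_simps)
    have "u \<noteq> (0,0)" using U_prim[OF uU] primitive_nz by blast
    then have uu: "ip u u > 0" by (cases u) (simp add: ip_def sum_squares_gt_zero_iff)
    have "ip u u * det2 x v > 0" using uu b by (simp add: between_def)
    then have gt: "ip x u * det2 u v > ip v u * det2 u x" using id by linarith
    have p1: "det2 u x > 0" "det2 u v > 0" using xC v(1) by (auto simp: C_def)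
    have "key x > key v"
    proof -
      have "real_of_int (ip x u) * real_of_int (det2 u v) > real_of_int (ip v u) * real_of_int (det2 u x)"
        using gt by (metis of_int_less_iff of_int_mult)
      then show ?thesis using p1 by (simp add: key_def field_simps)
    qed
    then show False using vmax xC by force
  qed
  then show ?thesis using v(1) unfolding C_def by blast
qed

lemma nxt_prop: assumes "u \<in> U"
  shows "nxt u \<in> U" "det2 u (nxt u) > 0" "\<forall>x\<in>U. \<not> between u x (nxt u)"
  using someI_ex[OF nxt_ex[OF assms]] unfolding nxt_def[symmetric] by blast+

lemma nxt_inj: "inj_on nxt U"
proof (rule inj_onI)
  fix a b assume a: "a \<in> U" and b: "b \<in> U" and e: "nxt a = nxt b"
  show "a = b"
  proof (rule ccontr)
    assume ne: "a \<noteq> b"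
    define v where "v = nxt a"
    have av: "det2 a v > 0" and bv: "det2 b v > 0" using nxt_prop[OF a] nxt_prop[OF b] e v_def by auto
    have "det2 v a < 0" "det2 v b < 0" using av bv det2_anti by (metis neg_less_0_iff_less)+
    then have "det2 a b \<noteq> 0" using half_distinct[OF a b ne, of "(- fst v, - snd v)"] det2_neg(2)
      by simp
    then show False
    proof (cases "det2 a b > 0")
      case True
      then have "between a b (nxt a)" using bv v_def by (simp add: between_def)
      then show False using nxt_prop(3)[OF a] b by blast
    next
      case False
      then have "det2 b a > 0" using \<open>det2 a b \<noteq> 0\<close> det2_anti[of a b] by simp
      then have "between b a (nxt b)" using av v_def e by (simp add: between_def)
      then show False using nxt_prop(3)[OF b] a by blast
    qed
  qed
qed

lemma nxt_U: "x \<in> U \<Longrightarrow> (nxt ^^ n) x \<in> U"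
  by (induction n) (simp_all add: nxt_prop(1))

lemma nxt_pow_inj: "x \<in> U \<Longrightarrow> y \<in> U \<Longrightarrow> (nxt ^^ n) x = (nxt ^^ n) y \<Longrightarrow> x = y"
proof (induction n)
  case 0 then show ?case by simp
next
  case (Suc n)
  then have "nxt ((nxt ^^ n) x) = nxt ((nxt ^^ n) y)" by simp
  then have "(nxt ^^ n) x = (nxt ^^ n) y" using nxt_inj nxt_U Suc.prems by (meson inj_onD)
  then show ?case using Suc by blast
qed

lemma nxt_period: assumes x: "x \<in> U" shows "\<exists>m>0. (nxt ^^ m) x = x"
proof -
  have finU: "finite U" by (simp add: U_def)
  define g where "g k = (nxt ^^ k) x" for k
  have "g ` {0..card U} \<subseteq> U" unfolding g_def using nxt_U[OF x] by blast
  then have "card (g ` {0..card U}) \<le> card U" using finU by (simp add: card_mono)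
  then have "card (g ` {0..card U}) < card {0..card U}" by simp
  then have "\<not> inj_on g {0..card U}" by (rule pigeonhole)
  then obtain i j where ij: "i \<in> {0..card U}" "j \<in> {0..card U}" "i \<noteq> j" "g i = g j"
    unfolding inj_on_def by blast
  define a where "a = min i j" define b where "b = max i j"
  have ab: "a < b" "g a = g b" using ij by (auto simp: a_def b_def min_def max_def)
  have "g b = (nxt ^^ a) ((nxt ^^ (b - a)) x)" using ab unfolding g_def
    by (metis add_diff_inverse_nat funpow_add not_less_iff_gr_or_eq o_apply)
  then have "(nxt ^^ a) x = (nxt ^^ a) ((nxt ^^ (b - a)) x)" using ab g_def by simp
  then have "x = (nxt ^^ (b - a)) x" using nxt_pow_inj x nxt_U by blast
  then show ?thesis using ab by (metis zero_less_diff)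
qed

lemma orbit_trans:
  assumes x: "x \<in> U" and h: "\<forall>n. 0 < s * det2 w ((nxt ^^ n) x)"
  shows "n > 0 \<Longrightarrow> det2 x ((nxt ^^ n) x) > 0"
proof (induction n)
  case 0 then show ?case by simp
next
  case (Suc n)
  show ?case
  proof (cases "n = 0")
    case True then show ?thesis using nxt_prop(2)[OF x] by simp
  next
    case False
    then have IH: "det2 x ((nxt ^^ n) x) > 0" using Suc by simp
    have step: "det2 ((nxt ^^ n) x) ((nxt ^^ Suc n) x) > 0" using nxt_prop(2)[OF nxt_U[OF x]] by simp
    have "0 < s * det2 w x" using h[rule_format, of 0] by simp
    then show ?thesis using det2_trans[OF _ h[rule_format, of n] h[rule_format, of "Suc n"] IH step] by blast
  qed
qed

lemma orbit_contra:
  assumes x: "x \<in> U" and h: "\<forall>n. 0 < s * det2 w ((nxt ^^ n) x)"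
  shows False
proof -
  obtain m where "m > 0" "(nxt ^^ m) x = x" using nxt_period[OF x] by blast
  then show False using orbit_trans[OF x h, of m] det2_self by simp
qed

lemma single_cycle:
  assumes u0: "u0 \<in> U" and v: "v \<in> U" shows "\<exists>k. (nxt ^^ k) u0 = v"
proof (rule ccontr)
  assume "\<not> ?thesis"
  then have nv: "\<forall>k. (nxt ^^ k) u0 \<noteq> v" by blast
  define o' where "o' k = (nxt ^^ k) u0" for k
  have oU: "o' k \<in> U" for k using nxt_U u0 by (simp add: o'_def)
  have onxt: "o' (Suc k) = nxt (o' k)" for k by (simp add: o'_def)
  have par: "det2 v (o' k) = 0 \<Longrightarrow> o' k = (- fst v, - snd v)" for k
  proof -
    assume "det2 v (o' k) = 0"
    moreover have "o' k \<noteq> v" using nv by (simp add: o'_def)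
    ultimately show ?thesis using prim_parallel[OF U_prim[OF v] U_prim[OF oU[of k]]] by blast
  qed
  have stepA: "det2 v (o' k) < 0 \<Longrightarrow> det2 v (o' (Suc k)) < 0" for k
  proof -
    assume a: "det2 v (o' k) < 0"
    have xv: "det2 (o' k) v > 0" using a det2_anti[of v "o' k"] by simp
    have nb: "\<not> between (o' k) v (o' (Suc k))" using nxt_prop(3)[OF oU[of k]] v onxt by simp
    then have le: "det2 v (o' (Suc k)) \<le> 0" using xv by (auto simp: between_def)
    have "det2 v (o' (Suc k)) \<noteq> 0"
    proof
      assume "det2 v (o' (Suc k)) = 0"
      then have "o' (Suc k) = (- fst v, - snd v)" using par by blast
      moreover have "det2 (o' k) (o' (Suc k)) > 0" using nxt_prop(2)[OF oU[of k]] onxt by simp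
      ultimately show False using xv det2_neg(1) by simp
    qed
    then show ?thesis using le by simp
  qed
  show False
  proof (cases "\<exists>k. det2 v (o' k) < 0")
    case True
    then obtain k where k: "det2 v (o' k) < 0" by blast
    have "\<forall>n. det2 v (o' (k + n)) < 0"
    proof
      fix n show "det2 v (o' (k + n)) < 0" by (induction n) (simp_all add: k stepA)
    qed
    moreover have "o' (k + n) = (nxt ^^ n) (o' k)" for n
      unfolding o'_def by (metis add.commute comp_apply funpow_add)
    ultimately have "\<forall>n. 0 < (-1) * det2 v ((nxt ^^ n) (o' k))" by simp
    then show False using orbit_contra[OF oU[of k]] by blast
  next
    case False
    then have ge: "\<forall>k. det2 v (o' k) \<ge> 0" by (simp add: not_less)
    have "\<forall>k. det2 v (o' k) > 0"
    proof
      fix k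
      show "det2 v (o' k) > 0"
      proof (rule ccontr)
        assume "\<not> det2 v (o' k) > 0"
        then have "det2 v (o' k) = 0" using ge[rule_format, of k] by simp
        then have ok: "o' k = (- fst v, - snd v)" using par by blast
        have "det2 (o' k) (o' (Suc k)) > 0" using nxt_prop(2)[OF oU[of k]] onxt by simp
        then have "det2 v (o' (Suc k)) < 0" using ok det2_neg(2) by simp
        then show False using ge[rule_format, of "Suc k"] by simp
      qed
    qed
    then have "\<forall>n. 0 < 1 * det2 v ((nxt ^^ n) u0)" by (simp add: o'_def)
    then show False using orbit_contra[OF u0] by blast
  qed
qed

end


lemma sep:
  assumes "det2 u v \<noteq> 0" "ip x u = ip y u" "ip x v = ip y v" shows "x = y"
proof -
  have "(fst x - fst y) * det2 u v = snd v * (ip x u - ip y u) - snd u * (ip x v - ip y v)"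
       "(snd x - snd y) * det2 u v = fst u * (ip x v - ip y v) - fst v * (ip x u - ip y u)"
    by (simp_all add: det2_def ip_def algebra_simps)
  then have "fst x = fst y" "snd x = snd y" using assms by simp_all
  then show ?thesis by (simp add: prod_eq_iff)
qed

lemma mv0: "mv x 0 r = x" by (simp add: mv_def)

lemma ip_lin: "ip x (b * fst u + a * fst v, b * snd u + a * snd v) = b * ip x u + a * ip x v"
  by (simp add: ip_def algebra_simps)

lemma det2_lin1: "det2 u (b * fst u + a * fst v, b * snd u + a * snd v) = a * det2 u v"
  by (simp add: det2_def algebra_simps)

lemma det2_lin2: "det2 (b * fst u + a * fst v, b * snd u + a * snd v) v = b * det2 u v"
  by (simp add: det2_def algebra_simps)

context pd begin

lemma det2_prim1: "a \<noteq> (0,0) \<Longrightarrow> det2 a u = gcd (fst a) (snd a) * det2 (prim a) u"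
  using det2_prim[of a u] det2_anti[of a u] det2_anti[of "prim a" u] by simp

lemma ep_in_nxt:
  assumes uU: "u \<in> U"
  shows "ep u \<in> LF (nxt u)"
proof -
  define e where "e = ep u"
  define u' where "u' = nxt u"
  have u: "primitive u" using U_prim[OF uU] .
  have eLF: "e \<in> LF u" using ep_prop(1)[OF uU] e_def by simp
  have emax: "\<forall>y\<in>LF u. E u y \<le> E u e" using ep_prop(2)[OF uU] e_def by simp
  have u'U: "u' \<in> U" and duu': "det2 u u' > 0" and nb: "\<forall>x\<in>U. \<not> between u x u'"
    using nxt_prop[OF uU] u'_def by auto
  have eP: "toR e \<in> P" using LF_P[OF eLF] .
  show ?thesis unfolding e_def[symmetric] u'_def[symmetric]
  proof (rule ccontr)
    assume "e \<notin> LF u'"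
    then have "\<not> (\<forall>s\<in>S. ip s u' \<le> ip e u')" using eP unfolding LF_iff by blast
    then have "\<exists>y\<in>S. ip e u' < ip y u'" by (simp add: not_le)
    define Y where "Y = {y\<in>S. ip e u' < ip y u'}"
    have finY: "finite Y" using finS by (simp add: Y_def)
    have neY: "Y \<noteq> {}" using \<open>\<exists>y\<in>S. _\<close> Y_def by blast
    define A where "A y = ip e u - ip y u" for y
    define B where "B y = ip y u' - ip e u'" for y
    have Bpos: "y \<in> Y \<Longrightarrow> B y > 0" for y by (simp add: B_def Y_def)
    have Anonneg: "y \<in> S \<Longrightarrow> A y \<ge> 0" for y
      using LF_le[OF eLF S_in_P] by (simp add: A_def)
    have Apos: "y \<in> Y \<Longrightarrow> A y > 0" for y
    proof (rule ccontr)
      assume yY: "y \<in> Y" and "\<not> A y > 0"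
      then have "A y = 0" using Anonneg[of y] by (simp add: Y_def)
      then have "ip y u = ip e u" by (simp add: A_def)
      then have yLF: "y \<in> LF u" using LF_iff eLF S_in_P yY by (simp add: Y_def)
      have ye: "y = mv e (E u y - E u e) (rot u)" using LF_diff[OF u eLF yLF] .
      have k: "E u y - E u e \<le> 0" using emax yLF by simp
      have "ip y u' = ip e u' + (E u y - E u e) * det2 u u'"
        by (subst ye) (simp add: ip_mv ip_comm[of "rot u"] ip_rot)
      also have "\<dots> \<le> ip e u'" using k duu' by (simp add: mult_nonpos_nonneg)
      finally show False using yY by (simp add: Y_def)
    qed
    define key where "key y = real_of_int (A y) / real_of_int (B y)" for y
    have f2: "finite (key ` Y)" "key ` Y \<noteq> {}" using finY neY by auto
    obtain y0 where y0: "y0 \<in> Y" "key y0 = Min (key ` Y)" using Min_in[OF f2] by auto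
    have y0min: "\<forall>y\<in>Y. A y0 * B y \<le> A y * B y0"
    proof
      fix y assume yY: "y \<in> Y"
      have "key y0 \<le> key y" using y0(2) Min_le[OF f2(1)] yY by simp
      then have "real_of_int (A y0) * real_of_int (B y) \<le> real_of_int (A y) * real_of_int (B y0)"
        using Bpos[OF yY] Bpos[OF y0(1)] by (simp add: key_def field_simps)
      then show "A y0 * B y \<le> A y * B y0" by (metis of_int_le_iff of_int_mult)
    qed
    define a0 where "a0 = A y0"
    define b0 where "b0 = B y0"
    have a0p: "a0 > 0" and b0p: "b0 > 0" using Apos[OF y0(1)] Bpos[OF y0(1)] a0_def b0_def by auto
    define w where "w = (b0 * fst u + a0 * fst u', b0 * snd u + a0 * snd u')"
    have ipw: "ip x w = b0 * ip x u + a0 * ip x u'" for x by (simp add: w_def ip_lin)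
    have Sw: "\<forall>s\<in>S. ip s w \<le> ip e w"
    proof
      fix s assume sS: "s \<in> S"
      have "ip s w - ip e w = a0 * B s - b0 * A s" by (simp add: ipw A_def B_def algebra_simps)
      also have "\<dots> \<le> 0"
      proof (cases "s \<in> Y")
        case True
        then show ?thesis using y0min a0_def b0_def by (simp add: mult.commute)
      next
        case False
        then have "B s \<le> 0" using sS by (simp add: Y_def B_def)
        then have "a0 * B s \<le> 0" using a0p by (simp add: mult_nonneg_nonpos)
        moreover have "b0 * A s \<ge> 0" using b0p Anonneg[OF sS] by simp
        ultimately show ?thesis by linarith
      qed
      finally show "ip s w \<le> ip e w" by simp
    qed
    have y0S: "y0 \<in> S" using y0(1) by (simp add: Y_def)
    have "ip y0 w = ip e w" by (simp add: ipw a0_def b0_def A_def B_def algebra_simps)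
    then have y0w: "y0 \<in> LF w" using Sw S_in_P[OF y0S] by (simp add: LF_iff)
    have ew: "e \<in> LF w" using Sw eP by (simp add: LF_iff)
    have ney: "e \<noteq> y0" using y0(1) by (auto simp: Y_def)
    have dw1: "det2 u w = a0 * det2 u u'" unfolding w_def by (rule det2_lin1)
    have dw2: "det2 w u' = b0 * det2 u u'" unfolding w_def by (rule det2_lin2)
    have wnz: "w \<noteq> (0,0)" using dw1 a0p duu' by (auto simp: det2_def)
    define g where "g = gcd (fst w) (snd w)"
    define pw where "pw = prim w"
    have gp: "g > 0" using prim_props(4)[OF wnz] g_def by simp
    have pwp: "primitive pw" using prim_props(1)[OF wnz] pw_def by simp
    have "w = (g * fst pw, g * snd pw)" using prim_props(2,3)[OF wnz] g_def pw_def by (simp add: prod_eq_iff)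
    then have "LF w = LF pw" using LF_scale[OF gp, of pw] by simp
    then have "pw \<in> U" using card2_U[OF pwp] ew y0w ney by simp
    moreover have "det2 u pw > 0"
    proof -
      have "det2 u w = g * det2 u pw" using det2_prim[OF wnz, of u] g_def pw_def by simp
      moreover have "a0 * det2 u u' > 0" using a0p duu' by simp
      ultimately have "g * det2 u pw > 0" using dw1 by simp
      then show ?thesis using gp by (simp add: zero_less_mult_iff)
    qed
    moreover have "det2 pw u' > 0"
    proof -
      have "det2 w u' = g * det2 pw u'" using det2_prim1[OF wnz, of u'] g_def pw_def by simp
      moreover have "b0 * det2 u u' > 0" using b0p duu' by simp
      ultimately have "g * det2 pw u' > 0" using dw2 by simp
      then show ?thesis using gp by (simp add: zero_less_mult_iff)
    qed
    ultimately show False using nb by (auto simp: between_def)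
  qed
qed

lemma ep_eq_sp:
  assumes uU: "u \<in> U"
  shows "ep u = sp (nxt u)"
proof -
  define e where "e = ep u"
  define u' where "u' = nxt u"
  have u'U: "u' \<in> U" and duu': "det2 u u' > 0" using nxt_prop[OF uU] u'_def by auto
  have u': "primitive u'" using U_prim[OF u'U] .
  have eLF: "e \<in> LF u" using ep_prop(1)[OF uU] e_def by simp
  have eLF': "e \<in> LF u'" using ep_in_nxt[OF uU] e_def u'_def by simp
  have spLF: "sp u' \<in> LF u'" using sp_prop(1)[OF u'U] .
  have k: "E u' e - E u' (sp u') \<ge> 0" using sp_prop(2)[OF u'U] eLF' by simp
  have es: "e = mv (sp u') (E u' e - E u' (sp u')) (rot u')" using LF_diff[OF u' spLF eLF'] .
  have "ip (sp u') u \<le> ip e u" using LF_le[OF eLF LF_P[OF spLF]] .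
  moreover have "ip e u = ip (sp u') u + (E u' e - E u' (sp u')) * det2 u' u"
    by (subst es) (simp add: ip_mv ip_comm[of "rot u'"] ip_rot)
  moreover have "det2 u' u < 0" using duu' det2_anti[of u' u] by simp
  ultimately have "(E u' e - E u' (sp u')) * det2 u' u \<ge> 0" by simp
  then have "E u' e - E u' (sp u') \<le> 0" using \<open>det2 u' u < 0\<close> by (simp add: zero_le_mult_iff)
  then have "E u' e - E u' (sp u') = 0" using k by simp
  then have "e = sp u'" using es by (simp add: mv0)
  then show ?thesis using e_def u'_def by simp
qed

lemma LF_le1: "primitive u \<Longrightarrow> LF u \<subseteq> {w} \<Longrightarrow> card (LF u) \<le> 1"
  using card_mono[of "{w}" "LF u"] by simp

lemma meet_pos:
  assumes uU: "u \<in> U" and vU: "v \<in> U" and d: "det2 u v > 0" and wu: "w \<in> LF u" and wv: "w \<in> LF v"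
  shows "v = nxt u \<and> w = ep u"
proof -
  define u' where "u' = nxt u"
  have u'U: "u' \<in> U" and duu': "det2 u u' > 0" and nb: "\<forall>x\<in>U. \<not> between u x u'"
    using nxt_prop[OF uU] u'_def by auto
  have vnxt: "v = u'"
  proof (rule ccontr)
    assume ne: "v \<noteq> u'"
    have "u' \<noteq> v" using ne by simp
    then have "det2 u' v \<noteq> 0" using half_distinct[OF u'U vU _ duu' d] by simp
    moreover have "\<not> det2 u' v < 0"
    proof
      assume "det2 u' v < 0"
      then have "between u v u'" using d det2_anti[of u' v] by (simp add: between_def)
      then show False using nb vU by blast
    qed
    ultimately have d2: "det2 u' v > 0" by simp
    have "LF u' \<subseteq> {w}"
    proof
      fix y assume yLF: "y \<in> LF u'"
      have yP: "toR y \<in> P" using LF_P[OF yLF] .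
      have h1: "ip y u \<le> ip w u" using LF_le[OF wu yP] .
      have h2: "ip y v \<le> ip w v" using LF_le[OF wv yP] .
      have h3: "ip w u' \<le> ip y u'" using LF_le[OF yLF LF_P[OF wu]] .
      have cr: "det2 u v * ip x u' = det2 u' v * ip x u + det2 u u' * ip x v" for x
        by (simp add: det2_def ip_def algebra_simps)
      have "det2 u' v * (ip w u - ip y u) + det2 u u' * (ip w v - ip y v) = det2 u v * (ip w u' - ip y u')"
        by (simp only: right_diff_distrib cr)
      also have "\<dots> \<le> 0" using h3 d by (simp add: mult_nonneg_nonpos)
      finally have le0: "det2 u' v * (ip w u - ip y u) + det2 u u' * (ip w v - ip y v) \<le> 0" .
      have t1: "det2 u' v * (ip w u - ip y u) \<ge> 0" using d2 h1 by simp
      have t2: "det2 u u' * (ip w v - ip y v) \<ge> 0" using duu' h2 by simp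
      have "det2 u' v * (ip w u - ip y u) = 0" using le0 t1 t2 by linarith
      then have e1: "ip y u = ip w u" using d2 by simp
      have "det2 u u' * (ip w v - ip y v) = 0" using le0 t1 t2 by linarith
      then have e2: "ip y v = ip w v" using duu' by simp
      have "y = w" using sep[of u v y w] d e1 e2 by simp
      then show "y \<in> {w}" by simp
    qed
    then have "card (LF u') \<le> 1" using LF_le1[OF U_prim[OF u'U]] by blast
    then show False using U_card[OF u'U] by simp
  qed
  have "ep u \<in> LF v" using ep_in_nxt[OF uU] vnxt u'_def by simp
  moreover have "ep u \<in> LF u" using ep_prop(1)[OF uU] .
  ultimately have "w = ep u" using sep[of u v w "ep u"] d LF_eq[OF wu, of "ep u"] LF_eq[OF wv, of "ep u"] by simp
  then show ?thesis using vnxt u'_def by simp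
qed

lemma meet:
  assumes uU: "u \<in> U" and vU: "v \<in> U" and ne: "u \<noteq> v" and wu: "w \<in> LF u" and wv: "w \<in> LF v"
  shows "(v = nxt u \<and> w = ep u) \<or> (u = nxt v \<and> w = ep v)"
proof (cases "det2 u v = 0")
  case True
  then have vneg: "v = (- fst u, - snd u)" using prim_parallel[OF U_prim[OF uU] U_prim[OF vU]] ne by auto
  define u' where "u' = nxt u"
  have u'U: "u' \<in> U" and duu': "det2 u u' > 0" using nxt_prop[OF uU] u'_def by auto
  have flat: "toR y \<in> P \<Longrightarrow> ip y u = ip w u" for y
  proof -
    assume yP: "toR y \<in> P"
    have "ip y u \<le> ip w u" using LF_le[OF wu yP] .
    moreover have "ip y v \<le> ip w v" using LF_le[OF wv yP] .
    ultimately show ?thesis using vneg by (simp add: ip_def)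
  qed
  obtain y1 where y1: "y1 \<in> LF u'" using U_ne[OF u'U] by blast
  have "LF u' \<subseteq> {y1}"
  proof
    fix y assume yLF: "y \<in> LF u'"
    have "ip y u = ip y1 u" using flat[OF LF_P[OF yLF]] flat[OF LF_P[OF y1]] by simp
    moreover have "ip y u' = ip y1 u'" using LF_eq[OF y1 yLF] .
    ultimately have "y = y1" using sep[of u u' y y1] duu' by simp
    then show "y \<in> {y1}" by simp
  qed
  then have "card (LF u') \<le> 1" using LF_le1[OF U_prim[OF u'U]] by blast
  then show ?thesis using U_card[OF u'U] by simp
next
  case False
  show ?thesis
  proof (cases "det2 u v > 0")
    case True
    then show ?thesis using meet_pos[OF uU vU True wu wv] by simp
  next
    case False2: False
    then have "det2 v u > 0" using \<open>det2 u v \<noteq> 0\<close> det2_anti[of u v] by simp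
    then show ?thesis using meet_pos[OF vU uU _ wv wu] by simp
  qed
qed

end


lemma poly_eq_nonzero:
  fixes p q :: "complex poly"
  assumes "\<forall>t. t \<noteq> 0 \<longrightarrow> poly p t = poly q t"
  shows "p = q"
proof (rule ccontr)
  assume "p \<noteq> q"
  then have "p - q \<noteq> 0" by simp
  then have fin: "finite {t. poly (p - q) t = 0}" by (rule poly_roots_finite)
  have "UNIV - {0} \<subseteq> {t. poly (p - q) t = 0}" using assms by auto
  then have "finite (UNIV - {0::complex})" using fin finite_subset by blast
  then show False by (simp add: infinite_UNIV_char_0)
qed

definition psum :: "nat \<Rightarrow> (nat \<Rightarrow> complex) \<Rightarrow> complex poly" where
  "psum L a = (\<Sum>k\<le>L. monom (a k) k)"

lemma poly_psum: "poly (psum L a) t = (\<Sum>k\<le>L. a k * t ^ k)"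
  by (simp add: psum_def poly_sum poly_monom)

lemma coeff_psum: "coeff (psum L a) i = (if i \<le> L then a i else 0)"
  by (simp add: psum_def coeff_sum coeff_monom)

lemma sum_powi:
  fixes t :: complex assumes "t \<noteq> 0"
  shows "(\<Sum>k\<le>L. a k * t powi (m + int k)) = t powi m * poly (psum L a) t"
  using assms by (simp add: poly_psum power_int_add power_int_of_nat sum_distrib_left algebra_simps)

lemma nec_alg:
  fixes a :: "nat \<Rightarrow> complex" and Q :: "complex poly"
  assumes dQ: "degree Q = L" and lQ: "coeff Q L = 1" and c0: "coeff Q 0 \<noteq> 0" and lam: "lam \<noteq> 0"
    and h: "\<forall>t. t \<noteq> 0 \<longrightarrow> (\<Sum>k\<le>L. a k * t powi (m + int k)) = lam * t powi s * poly Q t"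
  shows "a 0 = lam * coeff Q 0" "a L = lam"
proof -
  define A where "A = psum L a"
  have h2: "t \<noteq> 0 \<Longrightarrow> t powi m * poly A t = lam * t powi s * poly Q t" for t
    using h sum_powi A_def by metis
  have sm: "s = m"
  proof (cases "s \<ge> m")
    case True
    define d where "d = nat (s - m)"
    have sd: "s = m + int d" using True d_def by simp
    have "\<forall>t. t \<noteq> 0 \<longrightarrow> poly A t = poly (smult lam (monom 1 d * Q)) t"
    proof (intro allI impI)
      fix t :: complex assume t: "t \<noteq> 0"
      have "t powi m * poly A t = t powi m * (lam * t ^ d * poly Q t)"
        using h2[OF t] t by (simp add: sd power_int_add power_int_of_nat algebra_simps)
      then have "poly A t = lam * t ^ d * poly Q t" using t by simp
      then show "poly A t = poly (smult lam (monom 1 d * Q)) t" by (simp add: poly_monom algebra_simps)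
    qed
    then have AE: "A = smult lam (monom 1 d * Q)" by (rule poly_eq_nonzero)
    have "coeff A (L + d) = lam" using arg_cong[OF AE, of "\<lambda>p. coeff p (L + d)"] lQ
      by (simp add: coeff_monom_mult)
    moreover have "d > 0 \<Longrightarrow> coeff A (L + d) = 0" by (simp add: A_def coeff_psum)
    ultimately have "d = 0" using lam by (cases "d > 0") auto
    then show ?thesis using sd by simp
  next
    case False
    define d where "d = nat (m - s)"
    have md: "m = s + int d" and dp: "d > 0" using False d_def by simp_all
    have "\<forall>t. t \<noteq> 0 \<longrightarrow> poly (monom 1 d * A) t = poly (smult lam Q) t"
    proof (intro allI impI)
      fix t :: complex assume t: "t \<noteq> 0"
      have "t powi s * (t ^ d * poly A t) = t powi s * (lam * poly Q t)"
        using h2[OF t] t by (simp add: md power_int_add power_int_of_nat algebra_simps)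
      then have "t ^ d * poly A t = lam * poly Q t" using t by simp
      then show "poly (monom 1 d * A) t = poly (smult lam Q) t" by (simp add: poly_monom)
    qed
    then have "monom 1 d * A = smult lam Q" by (rule poly_eq_nonzero)
    then have "poly (monom 1 d * A) 0 = poly (smult lam Q) 0" by simp
    then have "lam * coeff Q 0 = 0" using dp by (simp add: poly_0_coeff_0 coeff_monom_mult)
    then show ?thesis using lam c0 by simp
  qed
  have "\<forall>t. t \<noteq> 0 \<longrightarrow> poly A t = poly (smult lam Q) t"
  proof (intro allI impI)
    fix t :: complex assume t: "t \<noteq> 0"
    have "t powi m * poly A t = t powi m * (lam * poly Q t)" using h2[OF t] sm by simp
    then show "poly A t = poly (smult lam Q) t" using t by simp
  qed
  then have AE: "A = smult lam Q" by (rule poly_eq_nonzero)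
  show "a 0 = lam * coeff Q 0" using arg_cong[OF AE, of "\<lambda>p. coeff p 0"] by (simp add: A_def coeff_psum)
  show "a L = lam" using arg_cong[OF AE, of "\<lambda>p. coeff p L"] lQ by (simp add: A_def coeff_psum)
qed

lemma suff_alg:
  fixes Q :: "complex poly" and t :: complex
  assumes dQ: "degree Q = L" and t: "t \<noteq> 0"
  shows "(\<Sum>k\<le>L. (lam * coeff Q k) * t powi (m + int k)) = lam * t powi m * poly Q t"
  using t by (simp add: power_int_add power_int_of_nat poly_altdef dQ sum_distrib_left algebra_simps)


lemma int_image_atMost: "int ` {..n} = {0..int n}"
proof
  show "int ` {..n} \<subseteq> {0..int n}" by auto
  show "{0..int n} \<subseteq> int ` {..n}"
  proof
    fix x assume x: "x \<in> {0..int n}"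
    then have "x = int (nat x)" "nat x \<in> {..n}" by auto
    then show "x \<in> int ` {..n}" by blast
  qed
qed

context pd begin

definition Q :: "(nat \<Rightarrow> complex) \<Rightarrow> int \<times> int \<Rightarrow> complex poly" where "Q z u = (\<Prod>j\<in>J u. [:- z j, 1:] ^ llen (D ! j))"
definition R :: "(nat \<Rightarrow> complex) \<Rightarrow> int \<times> int \<Rightarrow> complex" where "R z u = (\<Prod>j\<in>J u. z j ^ llen (D ! j))"

lemma finJ: "finite (J u)" by (simp add: J_def)

lemma Q_degree: "degree (Q z u) = L u"
  unfolding Q_def L_def
  using degree_prod_sum_eq[of "J u" "\<lambda>j. [:- z j, 1:] ^ llen (D ! j)"] by (simp add: degree_linear_power)

lemma Q_lead: "coeff (Q z u) (L u) = 1"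
proof -
  have "coeff (Q z u) (L u) = lead_coeff (Q z u)" using Q_degree[of z u] by simp
  also have "\<dots> = 1" unfolding Q_def lead_coeff_prod by (simp add: lead_coeff_power)
  finally show ?thesis .
qed

lemma Q_poly: "poly (Q z u) t = (\<Prod>j\<in>J u. (t - z j) ^ llen (D ! j))"
proof -
  have "poly [:- z j, 1:] t = t - z j" for j by simp
  then show ?thesis unfolding Q_def poly_prod poly_power by simp
qed

lemma even_llen: assumes ev: "even_multiset D" and j: "j < length D" shows "even (llen (D ! j))"
proof -
  have "D ! j \<in> set D" using j by simp
  then have "even (fst (D ! j))" "even (snd (D ! j))" using ev by (auto simp: even_multiset_def)
  then have "2 dvd gcd (fst (D ! j)) (snd (D ! j))" by (simp add: gcd_greatest)
  then show ?thesis unfolding llen_def by (simp add: even_nat_iff)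
qed

lemma Q_coeff0: assumes ev: "even_multiset D" shows "coeff (Q z u) 0 = R z u"
proof -
  have "coeff (Q z u) 0 = poly (Q z u) 0" by (simp add: poly_0_coeff_0)
  also have "\<dots> = (\<Prod>j\<in>J u. (- z j) ^ llen (D ! j))" by (simp add: Q_poly)
  also have "\<dots> = R z u" unfolding R_def
    by (rule prod.cong) (auto simp: J_def intro!: power_minus_even even_llen[OF ev])
  finally show ?thesis .
qed

lemma R_nz: assumes "z \<in> torus (length D)" shows "R z u \<noteq> 0"
  using assms unfolding R_def torus_def J_def by (simp add: finJ)

definition fpt where "fpt u k = mv (sp u) (int k) (rot u)"

lemma face_nat:
  assumes uU: "u \<in> U"
  shows "LF u = fpt u ` {..L u}" "inj_on (fpt u) {..L u}"
    "E u (fpt u k) = E u (sp u) + int k" "fpt u 0 = sp u" "fpt u (L u) = ep u"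
proof -
  have u: "primitive u" using U_prim[OF uU] .
  show "LF u = fpt u ` {..L u}" unfolding face_struct(1)[OF uU] fpt_def
    by (simp add: int_image_atMost[symmetric] image_image)
  show E: "E u (fpt u k) = E u (sp u) + int k" for k unfolding fpt_def using E_mv[OF u] by simp
  show "inj_on (fpt u) {..L u}"
  proof (rule inj_onI)
    fix a b assume "fpt u a = fpt u b"
    then have "E u (fpt u a) = E u (fpt u b)" by simp
    then show "a = b" using E by simp
  qed
  show "fpt u 0 = sp u" by (simp add: fpt_def mv0)
  show "fpt u (L u) = ep u" using face_struct(2)[OF uU] by (simp add: fpt_def)
qed

lemma sum_face:
  assumes uU: "u \<in> U"
  shows "(\<Sum>w\<in>LF u. c w * t powi E u w) = (\<Sum>k\<le>L u. c (fpt u k) * t powi (E u (sp u) + int k))"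
  by (simp add: face_nat(1,3)[OF uU] sum.reindex[OF face_nat(2)[OF uU]])

lemma U_nth: "u \<in> U \<Longrightarrow> \<exists>j<length D. prim (D ! j) = u"
proof -
  assume "u \<in> U"
  then obtain a where a: "a \<in> set D" "u = prim a" unfolding U_def by blast
  then obtain i where "i < length D" "D ! i = a" by (auto simp: in_set_conv_nth)
  then show ?thesis using a by blast
qed

lemma J_eq: "{i. i < length D \<and> prim (D ! i) = u} = J u" by (simp add: J_def)

lemma prodR: "(\<Prod>u\<in>U. R z u) = (\<Prod>j<length D. z j ^ llen (D ! j))"
proof -
  have "(\<Prod>u\<in>U. R z u) = (\<Prod>u\<in>U. \<Prod>j\<in>{x\<in>{..<length D}. prim (D ! x) = u}. z j ^ llen (D ! j))"
    unfolding R_def J_def by (intro prod.cong) auto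
  also have "\<dots> = (\<Prod>j<length D. z j ^ llen (D ! j))"
    by (rule prod.group) (auto simp: U_def)
  finally show ?thesis .
qed

lemma men_nec:
  assumes ev: "even_multiset D" and zt: "z \<in> torus (length D)" and men: "menelaus D P z"
  shows "(\<Prod>j<length D. z j ^ llen (D ! j)) = 1"
proof -
  obtain c where c: "\<forall>j<length D. \<exists>lam. lam \<noteq> 0 \<and> (\<exists>s. \<forall>t. t \<noteq> 0 \<longrightarrow>
       (\<Sum>w\<in>lat (face P (prim (D ! j))). c w * t powi ip w (dualv (prim (D ! j)))) =
       lam * t powi s * (\<Prod>i\<in>{i. i < length D \<and> prim (D ! i) = prim (D ! j)}. (t - z i) ^ llen (D ! i)))"
    using men unfolding menelaus_def by blast
  have key: "c (sp u) = R z u * c (sp (nxt u)) \<and> c (sp u) \<noteq> 0" if uU: "u \<in> U" for u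
  proof -
    obtain j where j: "j < length D" "prim (D ! j) = u" using U_nth[OF uU] by blast
    obtain lam s where lam: "lam \<noteq> 0" and h: "\<forall>t. t \<noteq> 0 \<longrightarrow>
       (\<Sum>w\<in>LF u. c w * t powi E u w) = lam * t powi s * poly (Q z u) t"
      using c[rule_format, OF j(1)] unfolding j(2) J_eq Q_poly[symmetric] LF_def[symmetric] E_def[symmetric]
      by blast
    have h2: "\<forall>t. t \<noteq> 0 \<longrightarrow> (\<Sum>k\<le>L u. c (fpt u k) * t powi (E u (sp u) + int k)) = lam * t powi s * poly (Q z u) t"
    proof (intro allI impI)
      fix t :: complex assume t: "t \<noteq> 0"
      show "(\<Sum>k\<le>L u. c (fpt u k) * t powi (E u (sp u) + int k)) = lam * t powi s * poly (Q z u) t"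
        using h[rule_format, OF t] sum_face[OF uU, of c t] by simp
    qed
    have c0: "coeff (Q z u) 0 \<noteq> 0" using Q_coeff0[OF ev] R_nz[OF zt] by simp
    note n = nec_alg[OF Q_degree Q_lead c0 lam h2]
    have "c (sp u) = lam * R z u" using n(1) face_nat(4)[OF uU] Q_coeff0[OF ev] by simp
    moreover have "c (sp (nxt u)) = lam" using n(2) face_nat(5)[OF uU] ep_eq_sp[OF uU] by simp
    ultimately show ?thesis using lam R_nz[OF zt] by simp
  qed
  have finU: "finite U" by (simp add: U_def)
  have img: "nxt ` U = U" using endo_inj_surj[OF finU _ nxt_inj] nxt_prop(1) by blast
  have "(\<Prod>u\<in>U. c (sp u)) = (\<Prod>u\<in>U. R z u * c (sp (nxt u)))"
    using key by (intro prod.cong) auto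
  also have "\<dots> = (\<Prod>u\<in>U. R z u) * (\<Prod>u\<in>U. c (sp (nxt u)))" by (simp add: prod.distrib)
  also have "(\<Prod>u\<in>U. c (sp (nxt u))) = (\<Prod>u\<in>U. c (sp u))"
    using prod.reindex[OF nxt_inj, of "\<lambda>u. c (sp u)"] img by simp
  finally have eq: "(\<Prod>u\<in>U. c (sp u)) = (\<Prod>u\<in>U. R z u) * (\<Prod>u\<in>U. c (sp u))" .
  have nz: "\<forall>u\<in>U. c (sp u) \<noteq> 0" using key by blast
  have "(\<Prod>u\<in>U. c (sp u)) \<noteq> 0" using nz by (simp only: prod_zero_iff[OF finU]) blast
  then have "(\<Prod>u\<in>U. R z u) = 1" using eq by simp
  then show ?thesis using prodR by simp
qed

end


context pd begin

lemma U_nonempty: "U \<noteq> {}"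
  using nd unfolding nondegenerate_def U_def by auto

lemma men_suff:
  assumes ev: "even_multiset D" and zt: "z \<in> torus (length D)"
    and pr: "(\<Prod>j<length D. z j ^ llen (D ! j)) = 1"
  shows "menelaus D P z"
proof -
  have finU: "finite U" by (simp add: U_def)
  obtain u0 where u0: "u0 \<in> U" using U_nonempty by blast
  define p where "p = (LEAST m. m > 0 \<and> (nxt ^^ m) u0 = u0)"
  have pex: "\<exists>m. m > 0 \<and> (nxt ^^ m) u0 = u0" using nxt_period[OF u0] by blast
  have p: "p > 0" "(nxt ^^ p) u0 = u0" using LeastI_ex[OF pex] p_def by auto
  have pmin: "\<And>m. 0 < m \<Longrightarrow> m < p \<Longrightarrow> (nxt ^^ m) u0 \<noteq> u0"
    using not_less_Least p_def by blast
  define o' where "o' i = (nxt ^^ i) u0" for i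
  have injo: "inj_on o' {0..<p}" unfolding o'_def using inj_on_funpow_least[OF p(2) pmin] by blast
  have imgo: "o' ` {0..<p} = U"
  proof
    show "o' ` {0..<p} \<subseteq> U" using nxt_U[OF u0] by (auto simp: o'_def)
    show "U \<subseteq> o' ` {0..<p}"
    proof
      fix v assume v: "v \<in> U"
      obtain k where k: "(nxt ^^ k) u0 = v" using single_cycle[OF u0 v] by blast
      have "o' (k mod p) = v" using funpow_mod_eq[OF p(2)] k by (simp add: o'_def)
      moreover have "k mod p \<in> {0..<p}" using p(1) by simp
      ultimately show "v \<in> o' ` {0..<p}" by blast
    qed
  qed
  have oSuc: "o' (Suc i) = nxt (o' i)" for i by (simp add: o'_def)
  define idx where "idx u = inv_into {0..<p} o' u" for u
  have idx1: "u \<in> U \<Longrightarrow> idx u < p \<and> o' (idx u) = u" for u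
    using inv_into_into[of u o' "{0..<p}"] f_inv_into_f[of u o' "{0..<p}"] imgo by (auto simp: idx_def)
  have idx2: "i < p \<Longrightarrow> idx (o' i) = i" for i
    using inv_into_f_f[OF injo] by (simp add: idx_def)
  define Gv where "Gv u = (\<Prod>i\<in>{idx u..<p}. R z (o' i))" for u
  have prodo: "(\<Prod>i\<in>{0..<p}. R z (o' i)) = 1"
  proof -
    have "(\<Prod>i\<in>{0..<p}. R z (o' i)) = (\<Prod>u\<in>U. R z u)"
      using prod.reindex[OF injo, of "R z"] imgo by simp
    also have "\<dots> = 1" using prodR pr by simp
    finally show ?thesis .
  qed
  have Gv_rec: "Gv u = R z u * Gv (nxt u)" if uU: "u \<in> U" for u
  proof -
    define i where "i = idx u"
    have i: "i < p" "o' i = u" using idx1[OF uU] i_def by auto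
    have nu: "nxt u = o' (Suc i)" using oSuc i by simp
    have Gu: "Gv u = R z u * (\<Prod>k\<in>{Suc i..<p}. R z (o' k))"
      unfolding Gv_def i_def[symmetric] using prod.atLeast_Suc_lessThan[OF i(1), of "\<lambda>k. R z (o' k)"] i(2) by simp
    show ?thesis
    proof (cases "Suc i < p")
      case True
      then have "idx (nxt u) = Suc i" using idx2 nu by simp
      then show ?thesis using Gu by (simp add: Gv_def)
    next
      case False
      then have si: "Suc i = p" using i by simp
      then have "nxt u = o' 0" using nu p(2) by (simp add: o'_def)
      then have "idx (nxt u) = 0" using idx2 p(1) by simp
      then have "Gv (nxt u) = 1" using prodo by (simp add: Gv_def)
      then show ?thesis using Gu si by simp
    qed
  qed
  have Gv_nz: "Gv u \<noteq> 0" for u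
    unfolding Gv_def using R_nz[OF zt] by simp
  define val where "val u x = Gv (nxt u) * coeff (Q z u) (nat (E u x - E u (sp u)))" for u x
  have val_sp: "val u (sp u) = Gv u" if "u \<in> U" for u
    using Gv_rec[OF that] Q_coeff0[OF ev] by (simp add: val_def)
  have val_ep: "val u (ep u) = Gv (nxt u)" if uU: "u \<in> U" for u
  proof -
    have "E u (ep u) - E u (sp u) = int (L u)"
      using face_nat(3)[OF uU, of "L u"] face_nat(5)[OF uU] by simp
    then show ?thesis by (simp add: val_def Q_lead)
  qed
  define c where "c x = (if \<exists>u\<in>U. x \<in> LF u then val (SOME u. u \<in> U \<and> x \<in> LF u) x else 0)" for x
  have c_eq: "c x = val u x" if uU: "u \<in> U" and xu: "x \<in> LF u" for u x
  proof -
    define v where "v = (SOME u. u \<in> U \<and> x \<in> LF u)"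
    have v: "v \<in> U" "x \<in> LF v" using someI[of "\<lambda>u. u \<in> U \<and> x \<in> LF u", OF conjI[OF uU xu]] v_def by auto
    have cv: "c x = val v x" using uU xu by (auto simp: c_def v_def)
    show ?thesis
    proof (cases "u = v")
      case True then show ?thesis using cv by simp
    next
      case False
      from meet[OF uU v(1) False xu v(2)] show ?thesis
      proof
        assume a: "v = nxt u \<and> x = ep u"
        then have "x = sp v" using ep_eq_sp[OF uU] by simp
        then have "val v x = Gv v" using val_sp[OF v(1)] by simp
        also have "\<dots> = val u x" using a val_ep[OF uU] by simp
        finally show ?thesis using cv by simp
      next
        assume a: "u = nxt v \<and> x = ep v"
        then have "val v x = Gv u" using val_ep[OF v(1)] by simp
        also have "x = sp u" using a ep_eq_sp[OF v(1)] by simp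
        then have "Gv u = val u x" using val_sp[OF uU] by simp
        finally show ?thesis using cv by simp
      qed
    qed
  qed
  show ?thesis unfolding menelaus_def
  proof (rule exI[of _ c], intro allI impI)
    fix j assume j: "j < length D"
    define u where "u = prim (D ! j)"
    have uU: "u \<in> U" using j unfolding u_def U_def by simp
    define lam where "lam = Gv (nxt u)"
    have "\<forall>t. t \<noteq> 0 \<longrightarrow> (\<Sum>w\<in>LF u. c w * t powi E u w) = lam * t powi (E u (sp u)) * poly (Q z u) t"
    proof (intro allI impI)
      fix t :: complex assume t: "t \<noteq> 0"
      have "(\<Sum>w\<in>LF u. c w * t powi E u w) = (\<Sum>k\<le>L u. c (fpt u k) * t powi (E u (sp u) + int k))"
        by (rule sum_face[OF uU])
      also have "\<dots> = (\<Sum>k\<le>L u. (lam * coeff (Q z u) k) * t powi (E u (sp u) + int k))"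
      proof (rule sum.cong)
        fix k assume k: "k \<in> {..L u}"
        have "fpt u k \<in> LF u" using face_nat(1)[OF uU] k by blast
        then have "c (fpt u k) = val u (fpt u k)" using c_eq[OF uU] by blast
        also have "\<dots> = lam * coeff (Q z u) k" using face_nat(3)[OF uU, of k] by (simp add: val_def lam_def)
        finally show "c (fpt u k) * t powi (E u (sp u) + int k) = (lam * coeff (Q z u) k) * t powi (E u (sp u) + int k)"
          by simp
      qed simp
      also have "\<dots> = lam * t powi (E u (sp u)) * poly (Q z u) t"
        by (rule suff_alg[OF Q_degree t])
      finally show "(\<Sum>w\<in>LF u. c w * t powi E u w) = lam * t powi (E u (sp u)) * poly (Q z u) t" .
    qed
    then show "\<exists>lam. lam \<noteq> 0 \<and> (\<exists>s. \<forall>t. t \<noteq> 0 \<longrightarrow>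
          (\<Sum>w\<in>lat (face P (prim (D ! j))). c w * t powi ip w (dualv (prim (D ! j)))) =
          lam * t powi s * (\<Prod>i\<in>{i. i < length D \<and> prim (D ! i) = prim (D ! j)}. (t - z i) ^ llen (D ! i)))"
      using Gv_nz[of "nxt u"] unfolding u_def[symmetric] J_eq Q_poly[symmetric] LF_def[symmetric] E_def[symmetric] lam_def
      by blast
  qed
qed

end


theorem lemma2p2:
  fixes D :: "(int \<times> int) list" and P :: "(real \<times> real) set"
  assumes "(0, 0) \<notin> set D"
    and "balanced D" and "nondegenerate D" and "even_multiset D"
    and "is_P_Delta D P"
  shows "torus_hypersurface (length D) {z \<in> torus (length D). menelaus D P z}"
proof -
  obtain S where S: "finite S" "P = convex hull (toR ` S)"
    and cF: "\<forall>u. primitive u \<longrightarrow> card (lat (face P u)) =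
          1 + (\<Sum>j\<in>{j. j < length D \<and> prim (D ! j) = u}. llen (D ! j))"
    using assms(5) unfolding is_P_Delta_def by blast
  interpret pd D P S
    using assms(1-3) S cF by unfold_locales auto
  define m where "m = length D"
  have X: "{z \<in> torus m. menelaus D P z} = {z \<in> torus m. (\<Prod>j<m. z j ^ llen (D ! j)) = 1}"
    using men_nec[OF assms(4)] men_suff[OF assms(4)] unfolding m_def by blast
  have mpos: "m > 0" using assms(3) unfolding nondegenerate_def m_def by (cases D) auto
  define e0 :: "nat \<Rightarrow> int" where "e0 j = (if j < m then int (llen (D ! j)) else 0)" for j
  have "llen (D ! 0) \<ge> 1" using prim_props(5)[OF D_nz] mpos m_def by simp
  then have "e0 0 \<noteq> 0" using mpos by (simp add: e0_def)
  then have e0nz: "e0 \<noteq> (\<lambda>_. 0)" by (metis)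
  define p :: "(nat \<Rightarrow> int) \<Rightarrow> complex" where
    "p e = (if e = e0 then 1 else if e = (\<lambda>_. 0) then -1 else 0)" for e
  have supp: "{e. p e \<noteq> 0} = {e0, \<lambda>_. 0}" using e0nz by (auto simp: p_def)
  have lp: "laurent_poly m p" unfolding laurent_poly_def supp
    using e0nz by (auto simp: p_def e0_def)
  have ev: "laurent_eval m p z = (\<Prod>j<m. z j ^ llen (D ! j)) - 1" for z
  proof -
    have "(\<Prod>j<m. z j powi e0 j) = (\<Prod>j<m. z j ^ llen (D ! j))"
      by (rule prod.cong) (simp_all add: e0_def power_int_of_nat)
    then show ?thesis unfolding laurent_eval_def supp using e0nz by (simp add: p_def)
  qed
  have "torus_hypersurface m {z \<in> torus m. menelaus D P z}"
    unfolding torus_hypersurface_def X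
  proof (intro exI conjI)
    show "laurent_poly m p" by (rule lp)
    show "e0 \<noteq> (\<lambda>_. 0)" by (rule e0nz)
    show "p e0 \<noteq> 0" "p (\<lambda>_. 0) \<noteq> 0" using e0nz by (simp_all add: p_def)
    show "{z \<in> torus m. (\<Prod>j<m. z j ^ llen (D ! j)) = 1} = {z \<in> torus m. laurent_eval m p z = 0}"
      by (simp add: ev)
  qed
  then show ?thesis by (simp add: m_def)
qed


end
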